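(* Consider $N$ independent channels, each a two-state Markov chain with common transition matrix $\mathbf{P}$, and let $i\in\{1,2\}$. There is a constant $C_i(\mathbf{P})$, depending only on $\mathbf{P}$ and the policy $\pi_i$, such that for any initial belief vector $\Omega(1)$ and any positive integer $M$, $$\Big|\mathbb{E}^{\pi_i}\Big[\sum_{t=1}^{M}Y^{\pi_i}(\mathbf{P},\Omega(1),t)\Big]-M\cdot U_i(\mathbf{P})\Big|<C_i(\mathbf{P}).$$
   Context: Time is slotted. The state $S_k(t)\in\{0,1\}$ of channel $k$ evolves as a two-state Markov chain with transition matrix $\mathbf{P}=(p_{xy})$, $p_{xy}=\Pr(S_k(t+1)=y\mid S_k(t)=x)$, independently across channels. In each slot a user senses one channel, observes its state, and receives reward equal to that state. $\Omega(1)=[\omega_1(1),\dots,\omega_N(1)]$ is the initial belief vector, $\omega_k(1)=\Pr(S_k(1)=1)$. $Y^{\pi}(\mathbf{P},\Omega(1),t)$ denotes the reward at time $t$ under policy $\pi$. Policies: a circular order $\kappa=(n_1,\dots,n_N)$ is identified with its cyclic shifts; $-\kappa$ is the reversed order and $k^+_\kappa$ the channel following $k$ in $\kappa$. Let $\kappa(1)=(n_1,\dots,n_N)$ with $\omega_{n_1}(1)\le\cdots\le\omega_{n_N}(1)$ and $\hat a(1)=\arg\max_k\omega_k(1)$. Policy $\pi_1$: for $t>1$, $\hat a(t)=\hat a(t-1)$ if $S_{\hat a(t-1)}(t-1)=1$, else $\hat a(t)=\hat a(t-1)^+_{\kappa(1)}$. Policy $\pi_2$: for $t>1$, $\hat a(t)=\hat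 a(t-1)$ if $S_{\hat a(t-1)}(t-1)=0$, else $\hat a(t)=\hat a(t-1)^+_{\kappa(t)}$, where $\kappa(t)=\kappa(1)$ for odd $t$ and $\kappa(t)=-\kappa(1)$ for even $t$. $U_i(\mathbf{P})=\lim_{T\to\infty}\frac1T\mathbb{E}^{\pi_i}\big[\sum_{t=1}^T Y^{\pi_i}(\mathbf{P},\Omega(1),t)\big]$ is the steady-state average expected reward of $\pi_i$; this limit exists and does not depend on $\Omega(1)$. *)

theory Defs
  imports "HOL-Probability.Probability"
begin

(* Channels are indexed 0..N-1; a channel state vector is s :: nat => bool
   (True = state 1, False = state 0), with s k = False for k >= N.
   The transition matrix P is P x y = Pr(S(t+1)=y | S(t)=x), x,y in {0,1}. *)

definition stochastic2 :: "(nat \<Rightarrow> nat \<Rightarrow> real) \<Rightarrow> bool" where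
  "stochastic2 P \<longleftrightarrow> (\<forall>x\<in>{0,1}. (\<forall>y\<in>{0,1}. 0 \<le> P x y) \<and> P x 0 + P x 1 = 1)"

definition valid_belief :: "nat \<Rightarrow> (nat \<Rightarrow> real) \<Rightarrow> bool" where
  "valid_belief N \<omega> \<longleftrightarrow> (\<forall>k<N. 0 \<le> \<omega> k \<and> \<omega> k \<le> 1)"

definition valid_order :: "nat \<Rightarrow> (nat \<Rightarrow> real) \<Rightarrow> nat list \<Rightarrow> bool" where
  "valid_order N \<omega> ord \<longleftrightarrow> distinct ord \<and> set ord = {..<N} \<and> sorted (map \<omega> ord)"

definition pos :: "nat list \<Rightarrow> nat \<Rightarrow> nat" where
  "pos ord k = (THE j. j < length ord \<and> ord ! j = k)"

definition cnext :: "nat list \<Rightarrow> nat \<Rightarrow> nat" where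
  "cnext ord k = ord ! ((pos ord k + 1) mod length ord)"

definition cprev :: "nat list \<Rightarrow> nat \<Rightarrow> nat" where
  "cprev ord k = ord ! ((pos ord k + length ord - 1) mod length ord)"

(* channel sensed at time t (t > 1) by policy pi_i, given the channel a sensed
   at time t-1 and its observed state obs = S_a(t-1) *)
definition policy_next :: "nat \<Rightarrow> nat list \<Rightarrow> nat \<Rightarrow> bool \<Rightarrow> nat \<Rightarrow> nat" where
  "policy_next i ord t obs a =
     (if i = 1 then (if obs then a else cnext ord a)
      else (if \<not> obs then a else (if odd t then cnext ord a else cprev ord a)))"

definition init_states :: "nat \<Rightarrow> (nat \<Rightarrow> real) \<Rightarrow> (nat \<Rightarrow> bool) pmf" where
  "init_states N \<omega> = Pi_pmf {..<N} False (\<lambda>k. bernoulli_pmf (\<omega> k))"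

definition trans_states :: "(nat \<Rightarrow> nat \<Rightarrow> real) \<Rightarrow> nat \<Rightarrow> (nat \<Rightarrow> bool) \<Rightarrow> (nat \<Rightarrow> bool) pmf" where
  "trans_states P N s = Pi_pmf {..<N} False
     (\<lambda>k. bernoulli_pmf (if s k then P 1 1 else P 0 1))"

(* joint distribution of (channel states S(t), sensed channel a(t)) at time t = n+1 *)
fun sys_dist :: "nat \<Rightarrow> (nat \<Rightarrow> nat \<Rightarrow> real) \<Rightarrow> nat \<Rightarrow> (nat \<Rightarrow> real) \<Rightarrow> nat list \<Rightarrow> nat
                  \<Rightarrow> nat \<Rightarrow> ((nat \<Rightarrow> bool) \<times> nat) pmf" where
  "sys_dist i P N \<omega> ord a1 0 = map_pmf (\<lambda>s. (s, a1)) (init_states N \<omega>)"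
| "sys_dist i P N \<omega> ord a1 (Suc n) =
     bind_pmf (sys_dist i P N \<omega> ord a1 n)
       (\<lambda>(s, a). map_pmf (\<lambda>s'. (s', policy_next i ord (n + 2) (s a) a)) (trans_states P N s))"

definition exp_reward :: "nat \<Rightarrow> (nat \<Rightarrow> nat \<Rightarrow> real) \<Rightarrow> nat \<Rightarrow> (nat \<Rightarrow> real) \<Rightarrow> nat list \<Rightarrow> nat
                  \<Rightarrow> nat \<Rightarrow> real" where
  "exp_reward i P N \<omega> ord a1 M =
     (\<Sum>n<M. measure_pmf.expectation (sys_dist i P N \<omega> ord a1 n)
                (\<lambda>(s, a). if s a then 1 else 0))"

definition avg_reward :: "nat \<Rightarrow> (nat \<Rightarrow> nat \<Rightarrow> real) \<Rightarrow> nat \<Rightarrow> (nat \<Rightarrow> real) \<Rightarrow> nat list \<Rightarrow> nat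
                  \<Rightarrow> real" where
  "avg_reward i P N \<omega> ord a1 = lim (\<lambda>T. exp_reward i P N \<omega> ord a1 T / real T)"

end

theory Submission
  imports Defs "HOL-Library.Function_Algebras"
begin


locale opT =
  fixes T :: "('x \<Rightarrow> real) \<Rightarrow> ('x \<Rightarrow> real)" and X :: "'x set"
  assumes fin: "finite X"
  and outV: "\<And>g x. x \<notin> X \<Longrightarrow> T g x = 0"
  and add: "\<And>g h. T (\<lambda>x. g x + h x) = (\<lambda>x. T g x + T h x)"
  and scl: "\<And>c g. T (\<lambda>x. c * g x) = (\<lambda>x. c * T g x)"
  and bnd: "\<And>g Bd x. (\<forall>y\<in>X. \<bar>g y\<bar> \<le> Bd) \<Longrightarrow> x \<in> X \<Longrightarrow> \<bar>T g x\<bar> \<le> Bd"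
begin

definition B where "B g = (\<lambda>x. T g x - g x)"

lemma T0: "T (\<lambda>x. 0) = (\<lambda>x. 0)"
  using scl[of 0 "\<lambda>x. 0"] by simp

lemma Tdiff: "T (\<lambda>x. g x - h x) = (\<lambda>x. T g x - T h x)"
proof -
  have "T (\<lambda>x. g x - h x) = T (\<lambda>x. g x + (-1) * h x)" by simp
  also have "\<dots> = (\<lambda>x. T g x + T (\<lambda>x. (-1) * h x) x)" by (rule add)
  also have "\<dots> = (\<lambda>x. T g x + (-1) * T h x)" unfolding scl ..
  also have "\<dots> = (\<lambda>x. T g x - T h x)" by simp
  finally show ?thesis .
qed

lemma Tsum: "finite K \<Longrightarrow> T (\<lambda>x. \<Sum>k\<in>K. c k * h k x) = (\<lambda>x. \<Sum>k\<in>K. c k * T (h k) x)"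
proof (induction K rule: finite_induct)
  case empty then show ?case by (simp add: T0)
next
  case (insert a K)
  have "T (\<lambda>x. \<Sum>k\<in>insert a K. c k * h k x) = T (\<lambda>x. c a * h a x + (\<Sum>k\<in>K. c k * h k x))"
    using insert by simp
  also have "\<dots> = (\<lambda>x. c a * T (h a) x + (\<Sum>k\<in>K. c k * T (h k) x))"
    by (simp add: add scl insert.IH)
  finally show ?case using insert by simp
qed

lemma Badd: "B (\<lambda>x. g x + h x) = (\<lambda>x. B g x + B h x)"
  by (simp add: B_def add fun_eq_iff)
lemma Bscl: "B (\<lambda>x. c * g x) = (\<lambda>x. c * B g x)"
  by (auto simp: B_def scl algebra_simps)
lemma Bdiff: "B (\<lambda>x. g x - h x) = (\<lambda>x. B g x - B h x)"
  by (simp add: B_def Tdiff fun_eq_iff)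
lemma Bsum: "finite K \<Longrightarrow> B (\<lambda>x. \<Sum>k\<in>K. c k * h k x) = (\<lambda>x. \<Sum>k\<in>K. c k * B (h k) x)"
  by (simp add: B_def Tsum sum_subtractf right_diff_distrib)

lemma Bpow_sum: "finite K \<Longrightarrow> (B^^n) (\<lambda>x. \<Sum>k\<in>K. c k * h k x) = (\<lambda>x. \<Sum>k\<in>K. c k * (B^^n) (h k) x)"
  by (induction n) (simp_all add: Bsum)

lemma Bpow_diff: "(B^^n) (\<lambda>x. g x - h x) = (\<lambda>x. (B^^n) g x - (B^^n) h x)"
  by (induction n) (simp_all add: Bdiff)

definition V where "V = {g. \<forall>x. x \<notin> X \<longrightarrow> g x = 0}"

lemma BV: "g \<in> V \<Longrightarrow> B g \<in> V" by (simp add: V_def B_def outV)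
lemma BpowV: "g \<in> V \<Longrightarrow> (B^^n) g \<in> V" by (induction n) (simp_all add: BV)

lemma Tpow_bnd: "(\<forall>y\<in>X. \<bar>g y\<bar> \<le> Bd) \<Longrightarrow> x \<in> X \<Longrightarrow> \<bar>(T^^n) g x\<bar> \<le> Bd"
proof (induction n arbitrary: x)
  case 0 then show ?case by simp
next
  case (Suc n) then show ?case by (simp add: bnd)
qed

lemma ker2:
  assumes u: "u \<in> V" and BB: "B (B u) = (\<lambda>x. 0)"
  shows "B u = (\<lambda>x. 0)"
proof -
  have TB: "T (B u) = B u"
  proof
    fix x
    have "B (B u) x = 0" using BB by simp
    then show "T (B u) x = B u x" unfolding B_def[of "B u"] by simp
  qed
  have Tu: "T u = (\<lambda>x. u x + B u x)" by (simp add: B_def)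
  have pw: "(T^^n) u = (\<lambda>x. u x + real n * B u x)" for n
  proof (induction n)
    case 0 then show ?case by simp
  next
    case (Suc n)
    have "(T^^Suc n) u = T (\<lambda>x. u x + real n * B u x)" using Suc by simp
    also have "\<dots> = (\<lambda>x. T u x + real n * T (B u) x)" by (simp add: add scl)
    also have "\<dots> = (\<lambda>x. u x + real (Suc n) * B u x)" using TB Tu by (simp add: algebra_simps)
    finally show ?case .
  qed
  define Bd where "Bd = (\<Sum>y\<in>X. \<bar>u y\<bar>)"
  have ub: "\<forall>y\<in>X. \<bar>u y\<bar> \<le> Bd"
  proof
    fix y assume "y \<in> X"
    then show "\<bar>u y\<bar> \<le> Bd" unfolding Bd_def using member_le_sum[of y X "\<lambda>y. \<bar>u y\<bar>"] fin by auto
  qed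
  show ?thesis
  proof
    fix x
    show "B u x = 0"
    proof (cases "x \<in> X")
      case False then show ?thesis using BV[OF u] by (simp add: V_def)
    next
      case True
      show ?thesis
      proof (rule ccontr)
        assume ne: "B u x \<noteq> 0"
        obtain n :: nat where n: "real n > 2 * Bd / \<bar>B u x\<bar>" using reals_Archimedean2 by blast
        have "\<bar>(T^^n) u x\<bar> \<le> Bd" using Tpow_bnd[OF ub True] .
        hence "\<bar>u x + real n * B u x\<bar> \<le> Bd" using pw by simp
        moreover have "\<bar>u x\<bar> \<le> Bd" using ub True by auto
        ultimately have "real n * \<bar>B u x\<bar> \<le> 2 * Bd" by (simp add: abs_mult)
        hence "real n \<le> 2 * Bd / \<bar>B u x\<bar>" using ne by (simp add: field_simps)
        then show False using n by simp
      qed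
    qed
  qed
qed

lemma kerk: "z \<in> V \<Longrightarrow> (B^^Suc k) z = (\<lambda>x. 0) \<Longrightarrow> B z = (\<lambda>x. 0)"
proof (induction k arbitrary: z)
  case 0 then show ?case by simp
next
  case (Suc k)
  have "(B^^Suc k) (B z) = (\<lambda>x. 0)" using Suc.prems(2) by (simp add: funpow_Suc_right del: funpow.simps)
  hence "B (B z) = (\<lambda>x. 0)" using Suc.IH BV[OF Suc.prems(1)] by blast
  then show ?case using ker2 Suc.prems(1) by blast
qed

lemma sum_fun: "(sum F A) x = sum (\<lambda>a. F a x) A"
  by (induction A rule: infinite_finite_induct) auto

lemma dep:
  assumes g: "g \<in> V"
  shows "\<exists>c. (\<exists>j\<le>card X. c j \<noteq> 0) \<and> (\<lambda>x. \<Sum>j\<le>card X. c j * (B^^j) g x) = (\<lambda>x. 0)"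
proof -
  interpret fv: vector_space "\<lambda>(c::real) (f::'x\<Rightarrow>real) x. c * f x"
    by unfold_locales (auto simp: fun_eq_iff algebra_simps)
  define m where "m = card X"
  define fam where "fam j = (B^^j) g" for j
  define \<delta> :: "'x \<Rightarrow> 'x \<Rightarrow> real" where "\<delta> y = (\<lambda>x. if y = x then 1 else 0 :: real)" for y
  have spanV: "f \<in> fv.span (\<delta> ` X)" if f: "f \<in> V" for f
  proof -
    have "f = (\<Sum>y\<in>X. (\<lambda>x. f y * \<delta> y x))"
    proof
      fix x
      have "(\<Sum>y\<in>X. (\<lambda>x. f y * \<delta> y x)) x = (\<Sum>y\<in>X. f y * \<delta> y x)" by (simp add: sum_fun)
      also have "\<dots> = (\<Sum>y\<in>X. if y = x then f y else 0)" by (rule sum.cong) (auto simp: \<delta>_def)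
      also have "\<dots> = (if x \<in> X then f x else 0)" by (rule sum.delta[OF fin])
      also have "\<dots> = f x" using f by (auto simp: V_def)
      finally show "f x = (\<Sum>y\<in>X. (\<lambda>x. f y * \<delta> y x)) x" by simp
    qed
    also have "\<dots> \<in> fv.span (\<delta> ` X)"
      by (intro fv.span_sum fv.span_scale fv.span_base) auto
    finally show ?thesis .
  qed
  show ?thesis
  proof (cases "inj_on fam {..m}")
    case True
    define F where "F = fam ` {..m}"
    have finF: "finite F" unfolding F_def by simp
    have cardF: "card F = Suc m" unfolding F_def using True by (simp add: card_image)
    have FV: "F \<subseteq> fv.span (\<delta> ` X)" unfolding F_def fam_def using BpowV[OF g] spanV by auto
    have "fv.dependent F"
    proof (rule ccontr)
      assume "\<not> fv.dependent F"
      hence "card F \<le> card (\<delta> ` X)" using fv.independent_span_bound[OF finite_imageI[OF fin] _ FV] by blast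
      also have "\<dots> \<le> m" unfolding m_def by (rule card_image_le[OF fin])
      finally show False using cardF by simp
    qed
    then obtain u where u1: "\<exists>v\<in>F. u v \<noteq> 0" and u2: "(\<Sum>v\<in>F. (\<lambda>x. u v * v x)) = 0"
      using fv.dependent_finite[OF finF] by blast
    define c where "c j = u (fam j)" for j
    have "(\<Sum>v\<in>F. (\<lambda>x. u v * v x)) = (\<Sum>j\<le>m. (\<lambda>x. c j * fam j x))"
      unfolding F_def c_def using True by (simp add: sum.reindex)
    hence "(\<lambda>x. \<Sum>j\<le>m. c j * fam j x) = (\<lambda>x. 0)" using u2 by (auto simp: fun_eq_iff sum_fun)
    moreover have "\<exists>j\<le>m. c j \<noteq> 0" using u1 unfolding F_def c_def by auto
    ultimately show ?thesis unfolding m_def fam_def by blast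
  next
    case False
    then obtain i j where ij: "i \<le> m" "j \<le> m" "i \<noteq> j" "fam i = fam j"
      unfolding inj_on_def by auto
    define c where "c k = (if k = i then 1 else if k = j then -1 else (0::real))" for k
    have "(\<Sum>k\<le>m. c k * fam k x) = 0" for x
    proof -
      have "\<And>k. c k * fam k x = (if k = i then fam i x else 0) + (if k = j then - fam j x else 0)"
        using ij by (auto simp: c_def)
      hence "(\<Sum>k\<le>m. c k * fam k x) = (\<Sum>k\<le>m. (if k = i then fam i x else 0) + (if k = j then - fam j x else 0))"
        by simp
      also have "\<dots> = fam i x - fam j x" using ij by (simp add: sum.distrib)
      finally show ?thesis using ij by simp
    qed
    moreover have "c i \<noteq> 0" by (simp add: c_def)
    ultimately show ?thesis using ij unfolding m_def fam_def by (intro exI[of _ c]) auto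
  qed
qed

lemma decomp:
  assumes g: "g \<in> V"
  shows "\<exists>v w. T v = v \<and> g = (\<lambda>x. v x + T w x - w x)"
proof -
  define m where "m = card X"
  define fam where "fam j = (B^^j) g" for j
  obtain c where cnz: "\<exists>j\<le>m. c j \<noteq> 0" and cs: "(\<lambda>x. \<Sum>j\<le>m. c j * fam j x) = (\<lambda>x. 0)"
    using dep[OF g] unfolding m_def fam_def by blast
  obtain j0 where j0: "j0 \<le> m" "c j0 \<noteq> 0" using cnz by blast
  define r where "r = (LEAST j. c j \<noteq> 0)"
  have cr: "c r \<noteq> 0" unfolding r_def by (rule LeastI[of _ j0]) (rule j0(2))
  have rm: "r \<le> m" unfolding r_def using Least_le[of "\<lambda>j. c j \<noteq> 0" j0] j0 by simp
  have below: "c j = 0" if "j < r" for j using not_less_Least[of j "\<lambda>j. c j \<noteq> 0"] that unfolding r_def by blast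
  define h where "h = (\<lambda>x. \<Sum>j\<in>{Suc r..m}. (- c j / c r) * fam (j - Suc r) x)"
  have famV: "fam j \<in> V" for j unfolding fam_def by (rule BpowV[OF g])
  have hV: "h \<in> V" using famV unfolding h_def V_def by auto
  have famr: "fam r = (B^^Suc r) h"
  proof -
    have "(B^^Suc r) h = (\<lambda>x. \<Sum>j\<in>{Suc r..m}. (- c j / c r) * (B^^Suc r) (fam (j - Suc r)) x)"
      unfolding h_def by (rule Bpow_sum) simp
    also have "\<dots> = (\<lambda>x. \<Sum>j\<in>{Suc r..m}. (- c j / c r) * fam j x)"
    proof -
      have "(B^^Suc r) (fam (j - Suc r)) = fam j" if "j \<in> {Suc r..m}" for j
      proof -
        have jj: "Suc r + (j - Suc r) = j" using that by simp
        have "(B^^Suc r) ((B^^(j - Suc r)) g) = (B^^(Suc r + (j - Suc r))) g"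
          by (simp only: funpow_add comp_apply)
        then show ?thesis unfolding fam_def jj .
      qed
      then show ?thesis by (intro ext sum.cong) auto
    qed
    also have "\<dots> = fam r"
    proof
      fix x
      have zz: "\<forall>i\<in>{..m} - {r..m}. c i * fam i x = 0"
      proof
        fix i assume "i \<in> {..m} - {r..m}"
        hence "i < r" by auto
        then show "c i * fam i x = 0" using below by simp
      qed
      have "0 = (\<Sum>j\<le>m. c j * fam j x)" using fun_cong[OF cs, of x] by simp
      also have "\<dots> = (\<Sum>j\<in>{r..m}. c j * fam j x)"
        by (rule sum.mono_neutral_right[OF _ _ zz]) auto
      also have "\<dots> = c r * fam r x + (\<Sum>j\<in>{Suc r..m}. c j * fam j x)"
        using rm by (simp add: sum.atLeast_Suc_atMost)
      finally have e: "c r * fam r x = - (\<Sum>j\<in>{Suc r..m}. c j * fam j x)" by linarith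
      have "(\<Sum>j\<in>{Suc r..m}. (- c j / c r) * fam j x) = - (\<Sum>j\<in>{Suc r..m}. c j * fam j x) / c r"
        unfolding sum_divide_distrib sum_negf[symmetric] by (rule sum.cong) auto
      also have "\<dots> = fam r x" using e cr by (simp add: field_simps)
      finally show "(\<Sum>j\<in>{Suc r..m}. (- c j / c r) * fam j x) = fam r x" .
    qed
    finally show ?thesis by simp
  qed
  define z where "z = (\<lambda>x. g x - B h x)"
  have zV: "z \<in> V" using g BV[OF hV] unfolding z_def V_def by auto
  have Brz: "(B^^r) z = (\<lambda>x. 0)"
  proof -
    have "(B^^r) z = (\<lambda>x. (B^^r) g x - (B^^r) (B h) x)" unfolding z_def by (rule Bpow_diff)
    also have "(B^^r) (B h) = (B^^Suc r) h" by (simp add: funpow_Suc_right del: funpow.simps)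
    finally show ?thesis using famr unfolding fam_def by simp
  qed
  show ?thesis
  proof (cases r)
    case 0
    hence "z = (\<lambda>x. 0)" using Brz by simp
    hence "g = (\<lambda>x. 0 + T h x - h x)" unfolding z_def B_def by (auto simp: fun_eq_iff)
    then show ?thesis using T0 by blast
  next
    case (Suc k)
    hence "B z = (\<lambda>x. 0)" using kerk[OF zV] Brz by blast
    hence "T z = z" unfolding B_def by (auto simp: fun_eq_iff)
    moreover have "g = (\<lambda>x. z x + T h x - h x)" unfolding z_def B_def by (auto simp: fun_eq_iff)
    ultimately show ?thesis by blast
  qed
qed


lemma Tpow_add: "(T^^n) (\<lambda>x. g x + h x) = (\<lambda>x. (T^^n) g x + (T^^n) h x)"
  by (induction n) (simp_all add: add)
lemma Tpow_diff: "(T^^n) (\<lambda>x. g x - h x) = (\<lambda>x. (T^^n) g x - (T^^n) h x)"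
  by (induction n) (simp_all add: Tdiff)
lemma Tpow_fix: "T v = v \<Longrightarrow> (T^^n) v = v"
  by (induction n) simp_all

end


definition SS :: "nat \<Rightarrow> (nat \<Rightarrow> bool) set" where
  "SS N = {s. \<forall>k. N \<le> k \<longrightarrow> \<not> s k}"

definition XX :: "nat \<Rightarrow> ((nat \<Rightarrow> bool) \<times> nat) set" where
  "XX N = SS N \<times> {..<N}"

definition Ex :: "'x set \<Rightarrow> 'x pmf \<Rightarrow> ('x \<Rightarrow> real) \<Rightarrow> real" where
  "Ex X p g = (\<Sum>x\<in>X. pmf p x * g x)"

lemma finite_SS: "finite (SS N)"
proof -
  have "SS N \<subseteq> (\<lambda>A k. k \<in> A) ` Pow {..<N}"
  proof
    fix s assume "s \<in> SS N"
    hence "{k. s k} \<in> Pow {..<N}" "s = (\<lambda>k. k \<in> {k. s k})" by (auto simp: SS_def not_le[symmetric])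
    then show "s \<in> (\<lambda>A k. k \<in> A) ` Pow {..<N}" by blast
  qed
  then show ?thesis by (rule finite_subset) simp
qed

lemma finite_XX: "finite (XX N)" by (simp add: XX_def finite_SS)

lemma set_Pi_SS: "set_pmf (Pi_pmf {..<N} False p) \<subseteq> SS N"
proof
  fix x assume "x \<in> set_pmf (Pi_pmf {..<N} False p)"
  hence "x \<in> {f. \<forall>x. x \<notin> {..<N} \<longrightarrow> f x = False}" using set_Pi_pmf_subset[of "{..<N}" False p] by blast
  then show "x \<in> SS N" by (auto simp: SS_def)
qed

lemma set_trans_states: "set_pmf (trans_states P N s) \<subseteq> SS N"
  unfolding trans_states_def by (rule set_Pi_SS)

lemma set_init_states: "set_pmf (init_states N \<omega>) \<subseteq> SS N"
  unfolding init_states_def by (rule set_Pi_SS)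

lemma Ex_expectation:
  assumes "finite X" "set_pmf p \<subseteq> X"
  shows "measure_pmf.expectation p g = Ex X p g"
  unfolding Ex_def using assms
  by (subst integral_measure_pmf_real[of X]) (auto simp: mult.commute)

lemma Ex_bind:
  assumes X: "finite X" and p: "set_pmf p \<subseteq> X" and q: "\<And>x. x \<in> X \<Longrightarrow> set_pmf (q x) \<subseteq> X"
  shows "Ex X (bind_pmf p q) g = Ex X p (\<lambda>x. Ex X (q x) g)"
proof -
  have pb: "pmf (bind_pmf p q) y = (\<Sum>x\<in>X. pmf p x * pmf (q x) y)" for y
    unfolding pmf_bind using Ex_expectation[OF X p, of "\<lambda>x. pmf (q x) y"] by (simp add: Ex_def)
  have "Ex X (bind_pmf p q) g = (\<Sum>y\<in>X. \<Sum>x\<in>X. pmf p x * pmf (q x) y * g y)"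
    unfolding Ex_def pb by (simp add: sum_distrib_right)
  also have "\<dots> = (\<Sum>x\<in>X. \<Sum>y\<in>X. pmf p x * (pmf (q x) y * g y))"
    by (subst sum.swap) (simp add: mult.assoc)
  also have "\<dots> = Ex X p (\<lambda>x. Ex X (q x) g)"
    unfolding Ex_def by (simp add: sum_distrib_left)
  finally show ?thesis .
qed

lemma Ex_cong: "(\<And>x. x \<in> X \<Longrightarrow> g x = h x) \<Longrightarrow> Ex X p g = Ex X p h"
  unfolding Ex_def by (rule sum.cong) auto

lemma Ex_add: "Ex X p (\<lambda>x. g x + h x) = Ex X p g + Ex X p h"
  unfolding Ex_def by (simp add: algebra_simps sum.distrib)
lemma Ex_diff: "Ex X p (\<lambda>x. g x - h x) = Ex X p g - Ex X p h"
  unfolding Ex_def by (simp add: algebra_simps sum_subtractf)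
lemma Ex_scl: "Ex X p (\<lambda>x. c * g x) = c * Ex X p g"
  unfolding Ex_def by (simp add: algebra_simps sum_distrib_left)

lemma Ex_bnd:
  assumes X: "finite X" and p: "set_pmf p \<subseteq> X" and b: "\<forall>y\<in>X. \<bar>g y\<bar> \<le> Bd"
  shows "\<bar>Ex X p g\<bar> \<le> Bd"
proof -
  have "\<bar>Ex X p g\<bar> \<le> (\<Sum>x\<in>X. \<bar>pmf p x * g x\<bar>)" unfolding Ex_def by (rule sum_abs)
  also have "\<dots> \<le> (\<Sum>x\<in>X. pmf p x * Bd)"
    by (rule sum_mono) (use b in \<open>auto simp: abs_mult intro!: mult_left_mono\<close>)
  also have "\<dots> = Bd" using sum_pmf_eq_1[OF X p] by (simp add: sum_distrib_right[symmetric])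
  finally show ?thesis .
qed

locale setting =
  fixes i :: nat and P :: "nat \<Rightarrow> nat \<Rightarrow> real" and N :: nat and ord :: "nat list"
  assumes dist: "distinct ord" and sord: "set ord = {..<N}" and N1: "N \<ge> 1"
begin

definition stp :: "nat \<Rightarrow> (nat \<Rightarrow> bool) \<times> nat \<Rightarrow> ((nat \<Rightarrow> bool) \<times> nat) pmf" where
  "stp t = (\<lambda>(s, a). map_pmf (\<lambda>s'. (s', policy_next i ord t (s a) a)) (trans_states P N s))"

abbreviation X where "X \<equiv> XX N"

definition KK :: "nat \<Rightarrow> ((nat \<Rightarrow> bool) \<times> nat \<Rightarrow> real) \<Rightarrow> ((nat \<Rightarrow> bool) \<times> nat \<Rightarrow> real)" where
  "KK t g = (\<lambda>x. if x \<in> X then Ex X (stp t x) g else 0)"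

definition TT where "TT g = KK 2 (KK 3 g)"

lemma len: "length ord = N"
  using distinct_card[OF dist] sord by simp

lemma pn: "a < N \<Longrightarrow> policy_next i ord t b a < N"
proof -
  assume a: "a < N"
  have "ord ! j \<in> {..<N}" if "j < length ord" for j using nth_mem[OF that] sord by blast
  moreover have "length ord > 0" using len N1 by simp
  ultimately show ?thesis using a
    unfolding policy_next_def cnext_def cprev_def by (auto simp: Let_def)
qed

lemma stp_set: "x \<in> X \<Longrightarrow> set_pmf (stp t x) \<subseteq> X"
  using set_trans_states[of P N] pn
  by (cases x) (auto simp: stp_def XX_def)

lemma pn_par: assumes h: "odd t = odd (t'::nat)" shows "policy_next i ord t b a = policy_next i ord t' b a"
  unfolding policy_next_def using h by auto

lemma stp_par: assumes h: "odd t = odd t'" shows "stp t = stp t'"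
proof -
  have e: "\<And>b a. policy_next i ord t b a = policy_next i ord t' b a" using pn_par[OF h] .
  show ?thesis unfolding stp_def e ..
qed

lemma KK_par: assumes h: "odd t = odd t'" shows "KK t = KK t'"
  unfolding KK_def stp_par[OF h] ..

lemma sys_Suc: "sys_dist i P N \<omega> ord a1 (Suc n) = bind_pmf (sys_dist i P N \<omega> ord a1 n) (stp (n + 2))"
  by (simp add: stp_def)

lemma sys_set: "a1 < N \<Longrightarrow> set_pmf (sys_dist i P N \<omega> ord a1 n) \<subseteq> X"
proof (induction n)
  case 0 then show ?case using set_init_states[of N \<omega>] by (auto simp: XX_def)
next
  case (Suc n) then show ?case using stp_set unfolding sys_Suc set_bind_pmf by blast
qed

lemma E_Suc:
  assumes "a1 < N"
  shows "Ex X (sys_dist i P N \<omega> ord a1 (Suc n)) g = Ex X (sys_dist i P N \<omega> ord a1 n) (KK (n+2) g)"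
proof -
  have "Ex X (sys_dist i P N \<omega> ord a1 (Suc n)) g = Ex X (sys_dist i P N \<omega> ord a1 n) (\<lambda>x. Ex X (stp (n+2) x) g)"
    unfolding sys_Suc by (rule Ex_bind[OF finite_XX sys_set[OF assms] stp_set])
  also have "\<dots> = Ex X (sys_dist i P N \<omega> ord a1 n) (KK (n+2) g)"
    by (rule Ex_cong) (simp add: KK_def)
  finally show ?thesis .
qed

lemma KK_add: "KK t (\<lambda>x. g x + h x) = (\<lambda>x. KK t g x + KK t h x)"
  unfolding KK_def by (auto simp: Ex_add)
lemma KK_scl: "KK t (\<lambda>x. c * g x) = (\<lambda>x. c * KK t g x)"
  unfolding KK_def by (auto simp: Ex_scl)
lemma KK_bnd: "(\<forall>y\<in>X. \<bar>g y\<bar> \<le> Bd) \<Longrightarrow> x \<in> X \<Longrightarrow> \<bar>KK t g x\<bar> \<le> Bd"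
  unfolding KK_def using Ex_bnd[OF finite_XX stp_set] by auto

sublocale opT TT X
proof
  show "finite X" by (rule finite_XX)
  show "\<And>g x. x \<notin> X \<Longrightarrow> TT g x = 0" by (simp add: TT_def KK_def)
  show "\<And>g h. TT (\<lambda>x. g x + h x) = (\<lambda>x. TT g x + TT h x)" by (simp add: TT_def KK_add)
  show "\<And>c g. TT (\<lambda>x. c * g x) = (\<lambda>x. c * TT g x)" by (simp add: TT_def KK_scl)
  show "\<And>g Bd x. \<forall>y\<in>X. \<bar>g y\<bar> \<le> Bd \<Longrightarrow> x \<in> X \<Longrightarrow> \<bar>TT g x\<bar> \<le> Bd"
    unfolding TT_def by (rule KK_bnd) (auto intro: KK_bnd)
qed

end


context setting begin

definition f0 :: "(nat \<Rightarrow> bool) \<times> nat \<Rightarrow> real" where "f0 = (\<lambda>(s, a). if s a then 1 else 0)"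
definition g0 where "g0 = (\<lambda>x. if x \<in> X then f0 x + KK 2 f0 x else 0)"

lemma g0V: "g0 \<in> V" by (simp add: V_def g0_def)

lemma E_even:
  assumes a1: "a1 < N"
  shows "Ex X (sys_dist i P N \<omega> ord a1 (2*m)) h = Ex X (sys_dist i P N \<omega> ord a1 0) ((TT^^m) h)"
proof (induction m arbitrary: h)
  case 0 then show ?case by simp
next
  case (Suc m)
  have k2: "KK (2*m+2) = KK 2" by (rule KK_par) simp
  have k3: "KK (Suc (2*m)+2) = KK 3" by (rule KK_par) simp
  have "Ex X (sys_dist i P N \<omega> ord a1 (2 * Suc m)) h = Ex X (sys_dist i P N \<omega> ord a1 (Suc (Suc (2*m)))) h"
    by simp
  also have "\<dots> = Ex X (sys_dist i P N \<omega> ord a1 (2*m)) (KK (2*m+2) (KK (Suc (2*m)+2) h))"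
    by (simp only: E_Suc[OF a1])
  also have "\<dots> = Ex X (sys_dist i P N \<omega> ord a1 (2*m)) (TT h)" by (simp only: k2 k3 TT_def)
  also have "\<dots> = Ex X (sys_dist i P N \<omega> ord a1 0) ((TT^^m) (TT h))" by (rule Suc.IH)
  also have "(TT^^m) (TT h) = (TT^^Suc m) h" by (simp add: funpow_Suc_right del: funpow.simps)
  finally show ?case .
qed

lemma E_pair:
  assumes a1: "a1 < N"
  shows "Ex X (sys_dist i P N \<omega> ord a1 (2*j)) f0 + Ex X (sys_dist i P N \<omega> ord a1 (Suc (2*j))) f0
         = Ex X (sys_dist i P N \<omega> ord a1 0) ((TT^^j) g0)"
proof -
  have k2: "KK (2*j+2) = KK 2" by (rule KK_par) simp
  have "Ex X (sys_dist i P N \<omega> ord a1 (Suc (2*j))) f0 = Ex X (sys_dist i P N \<omega> ord a1 (2*j)) (KK 2 f0)"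
    by (simp only: E_Suc[OF a1] k2)
  hence "Ex X (sys_dist i P N \<omega> ord a1 (2*j)) f0 + Ex X (sys_dist i P N \<omega> ord a1 (Suc (2*j))) f0
      = Ex X (sys_dist i P N \<omega> ord a1 (2*j)) (\<lambda>x. f0 x + KK 2 f0 x)" by (simp add: Ex_add)
  also have "\<dots> = Ex X (sys_dist i P N \<omega> ord a1 (2*j)) g0" by (rule Ex_cong) (simp add: g0_def)
  also have "\<dots> = Ex X (sys_dist i P N \<omega> ord a1 0) ((TT^^j) g0)" by (rule E_even[OF a1])
  finally show ?thesis .
qed

lemma sum_bound: fixes u :: "_ \<Rightarrow> real" shows "\<forall>y\<in>X. \<bar>u y\<bar> \<le> (\<Sum>y\<in>X. \<bar>u y\<bar>)"
proof
  fix y assume "y \<in> X"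
  then show "\<bar>u y\<bar> \<le> (\<Sum>y\<in>X. \<bar>u y\<bar>)" using member_le_sum[of y X "\<lambda>y. \<bar>u y\<bar>"] finite_XX by auto
qed

lemma bound:
  "\<exists>C. \<forall>\<omega> a1 M. a1 < N \<longrightarrow> \<bar>exp_reward i P N \<omega> ord a1 M - real M * avg_reward i P N \<omega> ord a1\<bar> < C"
proof -
  obtain v w where Tv: "TT v = v" and gd: "g0 = (\<lambda>x. v x + TT w x - w x)" using decomp[OF g0V] by blast
  define Vb where "Vb = (\<Sum>y\<in>X. \<bar>v y\<bar>)"
  define Wb where "Wb = (\<Sum>y\<in>X. \<bar>w y\<bar>)"
  have vb: "\<forall>y\<in>X. \<bar>v y\<bar> \<le> Vb" unfolding Vb_def by (rule sum_bound)
  have wb: "\<forall>y\<in>X. \<bar>w y\<bar> \<le> Wb" unfolding Wb_def by (rule sum_bound)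
  have gj: "(TT^^j) g0 = (\<lambda>x. v x + (TT^^Suc j) w x - (TT^^j) w x)" for j
  proof -
    have "(TT^^j) g0 = (\<lambda>x. (TT^^j) v x + (TT^^j) (TT w) x - (TT^^j) w x)"
      unfolding gd by (simp add: Tpow_diff Tpow_add)
    also have "(TT^^j) (TT w) = (TT^^Suc j) w" by (simp add: funpow_Suc_right del: funpow.simps)
    finally show ?thesis using Tpow_fix[OF Tv] by simp
  qed
  show ?thesis
  proof (rule exI[of _ "2 * Wb + Vb + 2"], intro allI impI)
    fix \<omega> a1 M assume a1: "a1 < N"
    define E where "E n h = Ex X (sys_dist i P N \<omega> ord a1 n) h" for n h
    define S where "S M = exp_reward i P N \<omega> ord a1 M" for M
    define c where "c = E 0 v"
    have Sdef: "S M = (\<Sum>n<M. E n f0)" for M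
      unfolding S_def exp_reward_def E_def f0_def
      by (rule sum.cong) (simp_all add: Ex_expectation[OF finite_XX sys_set[OF a1]])
    have Eb: "\<bar>E n h\<bar> \<le> Bd" if "\<forall>y\<in>X. \<bar>h y\<bar> \<le> Bd" for n h Bd
      unfolding E_def by (rule Ex_bnd[OF finite_XX sys_set[OF a1] that])
    have pairj: "E (2*j) f0 + E (Suc (2*j)) f0 = c + E 0 ((TT^^Suc j) w) - E 0 ((TT^^j) w)" for j
      unfolding E_def c_def using E_pair[OF a1, of \<omega> j] gj by (simp add: Ex_add Ex_diff)
    have S_even: "S (2*m) = real m * c + E 0 ((TT^^m) w) - E 0 w" for m
    proof (induction m)
      case 0 then show ?case by (simp add: Sdef)
    next
      case (Suc m)
      have "S (2 * Suc m) = S (2*m) + E (2*m) f0 + E (Suc (2*m)) f0"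
        unfolding Sdef by simp
      then show ?case using Suc pairj[of m] by (simp add: algebra_simps)
    qed
    have wB: "\<bar>E 0 ((TT^^m) w)\<bar> \<le> Wb" for m
      by (rule Eb) (use Tpow_bnd[OF wb] in blast)
    have w0: "\<bar>E 0 w\<bar> \<le> Wb" by (rule Eb[OF wb])
    have cB: "\<bar>c\<bar> \<le> Vb" unfolding c_def by (rule Eb[OF vb])
    have fB: "\<bar>E n f0\<bar> \<le> 1" for n by (rule Eb) (auto simp: f0_def)
    define D where "D M = S M - real M * (c/2)" for M
    have Db: "\<bar>D M\<bar> \<le> 2 * Wb + Vb + 1" for M
    proof (cases "even M")
      case True
      define m where "m = M div 2"
      have m: "M = 2*m" unfolding m_def using True by simp
      have "D M = E 0 ((TT^^m) w) - E 0 w" unfolding D_def m S_even by simp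
      then show ?thesis using wB[of m] w0 cB by (simp only: abs_le_iff) linarith
    next
      case False
      define m where "m = M div 2"
      have m: "M = Suc (2*m)" unfolding m_def using False by presburger
      have "S M = S (2*m) + E (2*m) f0" unfolding m Sdef by simp
      hence "D M = E 0 ((TT^^m) w) - E 0 w + E (2*m) f0 - c/2" unfolding D_def m S_even by (simp add: field_simps)
      then show ?thesis using wB[of m] w0 cB fB[of "2*m"] by (simp only: abs_le_iff) linarith
    qed
    define K where "K = 2 * Wb + Vb + 1"
    have "(\<lambda>M. D M / real M) \<longlonglongrightarrow> 0"
    proof (rule Lim_null_comparison)
      show "\<forall>\<^sub>F M in sequentially. norm (D M / real M) \<le> K / real M"
        by (rule always_eventually) (auto simp: K_def abs_divide intro!: divide_right_mono Db)
      show "(\<lambda>M. K / real M) \<longlonglongrightarrow> 0" by (rule lim_const_over_n)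
    qed
    hence "(\<lambda>M. D M / real M + c/2) \<longlonglongrightarrow> c/2" using tendsto_add[OF _ tendsto_const[of "c/2"]] by fastforce
    hence lim1: "(\<lambda>M. S M / real M) \<longlonglongrightarrow> c/2"
    proof (rule Lim_transform_eventually)
      show "\<forall>\<^sub>F M in sequentially. D M / real M + c/2 = S M / real M"
      proof (rule eventually_sequentiallyI[of 1])
        fix M :: nat assume "1 \<le> M"
        then show "D M / real M + c/2 = S M / real M" by (simp add: D_def field_simps)
      qed
    qed
    have avg: "avg_reward i P N \<omega> ord a1 = c/2"
      unfolding avg_reward_def using limI[OF lim1] by (simp add: S_def)
    have "\<bar>exp_reward i P N \<omega> ord a1 M - real M * avg_reward i P N \<omega> ord a1\<bar> = \<bar>D M\<bar>"
      unfolding avg D_def S_def ..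
    also have "\<dots> < 2 * Wb + Vb + 2" using Db[of M] by simp
    finally show "\<bar>exp_reward i P N \<omega> ord a1 M - real M * avg_reward i P N \<omega> ord a1\<bar> < 2 * Wb + Vb + 2" .
  qed
qed

end

theorem lemma2:
  fixes P :: "nat \<Rightarrow> nat \<Rightarrow> real" and N :: nat and i :: nat
  assumes "stochastic2 P" and "N \<ge> 1" and "i \<in> {1, 2}"
  shows "\<exists>C. \<forall>\<omega> ord a1 M.
           valid_belief N \<omega> \<and> valid_order N \<omega> ord \<and> a1 < N \<and> (\<forall>k<N. \<omega> k \<le> \<omega> a1) \<and> M \<ge> 1
           \<longrightarrow> \<bar>exp_reward i P N \<omega> ord a1 M - real M * avg_reward i P N \<omega> ord a1\<bar> < C"
proof -
  define L where "L = {ord. distinct ord \<and> set ord = {..<N}}"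
  have "L \<subseteq> {xs. set xs \<subseteq> {..<N} \<and> length xs = N}"
    unfolding L_def using distinct_card by fastforce
  hence finL: "finite L" by (rule finite_subset) (rule finite_lists_length_eq, simp)
  have "\<forall>ord\<in>L. \<exists>C. \<forall>\<omega> a1 M. a1 < N \<longrightarrow> \<bar>exp_reward i P N \<omega> ord a1 M - real M * avg_reward i P N \<omega> ord a1\<bar> < C"
  proof
    fix ord assume "ord \<in> L"
    then interpret setting i P N ord using assms(2) by unfold_locales (auto simp: L_def)
    show "\<exists>C. \<forall>\<omega> a1 M. a1 < N \<longrightarrow> \<bar>exp_reward i P N \<omega> ord a1 M - real M * avg_reward i P N \<omega> ord a1\<bar> < C"
      by (rule bound)
  qed
  then obtain Cf where Cf: "\<forall>ord\<in>L. \<forall>\<omega> a1 M. a1 < N \<longrightarrow> \<bar>exp_reward i P N \<omega> ord a1 M - real M * avg_reward i P N \<omega> ord a1\<bar> < Cf ord"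
    by (metis bchoice)
  show ?thesis
  proof (rule exI[of _ "\<Sum>q\<in>L. \<bar>Cf q\<bar>"], intro allI impI)
    fix \<omega> :: "nat \<Rightarrow> real" and ord :: "nat list" and a1 M :: nat
    assume h: "valid_belief N \<omega> \<and> valid_order N \<omega> ord \<and> a1 < N \<and> (\<forall>k<N. \<omega> k \<le> \<omega> a1) \<and> M \<ge> 1"
    hence oL: "ord \<in> L" by (simp add: valid_order_def L_def)
    have "\<bar>exp_reward i P N \<omega> ord a1 M - real M * avg_reward i P N \<omega> ord a1\<bar> < Cf ord" using Cf oL h by blast
    also have "\<dots> \<le> \<bar>Cf ord\<bar>" by simp
    also have "\<dots> \<le> (\<Sum>q\<in>L. \<bar>Cf q\<bar>)" using member_le_sum[of ord L "\<lambda>q. \<bar>Cf q\<bar>"] oL finL by auto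
    finally show "\<bar>exp_reward i P N \<omega> ord a1 M - real M * avg_reward i P N \<omega> ord a1\<bar> < (\<Sum>q\<in>L. \<bar>Cf q\<bar>)" .
  qed
qed

end
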